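(* Consider a system of $M$ conservation laws with state space $\mathcal D\subset\mathbb R^M$, entropy variables $\mathbf v=(v^1,\dots,v^M):\mathcal D\to\mathbb R^M$, entropy flux potential $\Psi:\mathcal D\to\mathbb R$, and an entropy conservative two-point flux $\mathbf f^{\mathrm{EC}}=(f^{\mathrm{EC},1},\dots,f^{\mathrm{EC},M}):\mathcal D\times\mathcal D\to\mathbb R^M$, i.e. $(\mathbf v(\mathbf u_R)-\mathbf v(\mathbf u_L))^T\mathbf f^{\mathrm{EC}}(\mathbf u_L,\mathbf u_R)=\Psi(\mathbf u_R)-\Psi(\mathbf u_L)$ for all $\mathbf u_L,\mathbf u_R$. Let an element $R$ with $N_R+1$ interface nodes, diagonal positive weight matrix $\mathbf M_R$ and edge length $\Delta_R>0$ share its edge with $E\ge1$ elements $L_1,\dots,L_E$, where $L_i$ has $N_{L_i}+1$ interface nodes, diagonal positive weight matrix $\mathbf M_{L_i}$ and edge length $\Delta_{L_i}>0$, $\sum_i\Delta_{L_i}=\Delta_R$. Let $\mathbf P_{L_i2R}\in\mathbb R^{(N_R+1)\times(N_{L_i}+1)}$, $\mathbf P_{R2L_i}\in\mathbb R^{(N_{L_i}+1)\times(N_R+1)}$ satisfy $$\Delta_{L_i}\mathbf P_{R2L_i}^T\mathbf M_{L_i}=\Delta_R\mathbf M_R\mathbf P_{L_i2R},\qquad \mathbf P_{R2L_i}\mathbf 1^R=\mathbf 1^{L_i}\quad(i=1,\dots,E),\qquad \sum_{i=1}^E\mathbf P_{L_i2R}\mathbf 1^{L_i}=\mathbf 1^R.$$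 Given arbitrary states $\mathbf U^{L_i}_k\in\mathcal D$ ($k=0,\dots,N_{L_i}$) and $\mathbf U^R_j\in\mathcal D$ ($j=0,\dots,N_R$), define for $q=1,\dots,M$ the matrices $[\mathbf F^q_{L_i,R}]_{kj}=f^{\mathrm{EC},q}(\mathbf U^{L_i}_k,\mathbf U^R_j)$ and the surface fluxes $$\mathbf F^{q,R}:=\sum_{i=1}^E\mathbb E\big(\mathbf P_{L_i2R}\mathbf F^q_{L_i,R}\big),\qquad \mathbf F^{q,L_i}:=\mathbb E\big(\mathbf P_{R2L_i}(\mathbf F^q_{L_i,R})^T\big).$$ With $V^{q,L_i}_k=v^q(\mathbf U^{L_i}_k)$, $\Psi^{L_i}_k=\Psi(\mathbf U^{L_i}_k)$, $V^{q,R}_j=v^q(\mathbf U^R_j)$, $\Psi^R_j=\Psi(\mathbf U^R_j)$, one has for every $q$ $$\Delta U^q:=\Delta_R(\mathbf 1^R)^T\mathbf M_R\mathbf F^{q,R}-\sum_{i=1}^E\Delta_{L_i}(\mathbf 1^{L_i})^T\mathbf M_{L_i}\mathbf F^{q,L_i}=0$$ and $$\Delta S:=\Delta_R\Big(\sum_{q=1}^M(\mathbf V^{q,R})^T\mathbf M_R\mathbf F^{q,R}-(\mathbf 1^R)^T\mathbf M_R\boldsymbol\Psi^R\Big)-\sum_{i=1}^E\Delta_{L_i}\Big(\sum_{q=1}^M(\mathbf V^{q,L_i})^T\mathbf M_{L_i}\mathbf F^{q,L_i}-(\mathbf 1^{L_i})^T\mathbf M_{L_i}\boldsymbol\Psi^{L_i}\Big)=0,$$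 i.e. the fluxes are primary and entropy conservative.
   Context: Setting: a nodal discontinuous Galerkin spectral element method on Legendre–Gauss–Lobatto nodes (summation-by-parts operators) on a rectangular mesh with hanging nodes ($h$ refinement) and possibly differing polynomial degrees; a hyperbolic system with strongly convex entropy $S$, entropy variables $\mathbf v=\partial S/\partial\mathbf u$, entropy flux $F$, and potential $\Psi=\mathbf v\cdot\mathbf f-F$ where $\mathbf f$ is the interface-normal flux. Here one large element $R$ is adjacent across one edge to $E$ smaller elements $L_1,\dots,L_E$ stacked along that edge. $\Delta U^q$ and $\Delta S$ are (up to a common positive factor) the contributions of this interface to the time rate of change of the total integral of the $q$-th conserved variable and of the total entropy when entropy conservative volume fluxes are used; "primary and entropy conservative" means they vanish. Notation: $\mathbb E(\mathbf W)$ is the vector of diagonal entries of a square matrix $\mathbf W$; $\mathbf 1^R,\mathbf 1^{L_i}$ are all-ones vectors of the appropriate sizes. *)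

theory Defs
  imports "HOL-Analysis.Analysis"
begin

(* Matrices of variable size are represented as functions nat => nat => real,
   with dimensions carried explicitly; vectors as nat => real. *)

definition mat_mult :: "(nat \<Rightarrow> nat \<Rightarrow> real) \<Rightarrow> (nat \<Rightarrow> nat \<Rightarrow> real) \<Rightarrow> nat \<Rightarrow> (nat \<Rightarrow> nat \<Rightarrow> real)"
  where "mat_mult A B n = (\<lambda>r c. \<Sum>l<n. A r l * B l c)"

definition mat_transp :: "(nat \<Rightarrow> nat \<Rightarrow> real) \<Rightarrow> (nat \<Rightarrow> nat \<Rightarrow> real)"
  where "mat_transp A = (\<lambda>r c. A c r)"

definition diag_entries :: "(nat \<Rightarrow> nat \<Rightarrow> real) \<Rightarrow> (nat \<Rightarrow> real)"
  where "diag_entries W = (\<lambda>r. W r r)"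

end

theory Submission
  imports Defs
begin

theorem corollary1:
  fixes M :: nat
    and D :: "(nat \<Rightarrow> real) set"
    and v :: "(nat \<Rightarrow> real) \<Rightarrow> nat \<Rightarrow> real"
    and Psi :: "(nat \<Rightarrow> real) \<Rightarrow> real"
    and fEC :: "(nat \<Rightarrow> real) \<Rightarrow> (nat \<Rightarrow> real) \<Rightarrow> nat \<Rightarrow> real"
    and E NR :: nat and NL :: "nat \<Rightarrow> nat"
    and WR :: "nat \<Rightarrow> real" and WL :: "nat \<Rightarrow> nat \<Rightarrow> real"
    and DR :: real and DL :: "nat \<Rightarrow> real"
    and PL2R PR2L :: "nat \<Rightarrow> nat \<Rightarrow> nat \<Rightarrow> real"
    and UL :: "nat \<Rightarrow> nat \<Rightarrow> (nat \<Rightarrow> real)" and UR :: "nat \<Rightarrow> (nat \<Rightarrow> real)"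
    and F :: "nat \<Rightarrow> nat \<Rightarrow> nat \<Rightarrow> nat \<Rightarrow> real"
    and FR :: "nat \<Rightarrow> nat \<Rightarrow> real" and FL :: "nat \<Rightarrow> nat \<Rightarrow> nat \<Rightarrow> real"
  assumes EC: "\<And>uL uR. uL \<in> D \<Longrightarrow> uR \<in> D \<Longrightarrow>
        (\<Sum>q<M. (v uR q - v uL q) * fEC uL uR q) = Psi uR - Psi uL"
    and E_pos: "E \<ge> 1"
    and WR_pos: "\<And>j. j \<le> NR \<Longrightarrow> WR j > 0"
    and WL_pos: "\<And>i k. i < E \<Longrightarrow> k \<le> NL i \<Longrightarrow> WL i k > 0"
    and DR_pos: "DR > 0"
    and DL_pos: "\<And>i. i < E \<Longrightarrow> DL i > 0"
    and DL_sum: "(\<Sum>i<E. DL i) = DR"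
    and SBP: "\<And>i j k. i < E \<Longrightarrow> j \<le> NR \<Longrightarrow> k \<le> NL i \<Longrightarrow>
        DL i * (mat_transp (PR2L i) j k * WL i k) = DR * (WR j * PL2R i j k)"
    and R2L_one: "\<And>i k. i < E \<Longrightarrow> k \<le> NL i \<Longrightarrow> (\<Sum>j\<le>NR. PR2L i k j) = 1"
    and L2R_one: "\<And>j. j \<le> NR \<Longrightarrow> (\<Sum>i<E. \<Sum>k\<le>NL i. PL2R i j k) = 1"
    and UL_D: "\<And>i k. i < E \<Longrightarrow> k \<le> NL i \<Longrightarrow> UL i k \<in> D"
    and UR_D: "\<And>j. j \<le> NR \<Longrightarrow> UR j \<in> D"
    and F_def: "\<And>i q. F i q = (\<lambda>k j. fEC (UL i k) (UR j) q)"
    and FR_def: "\<And>q. FR q = (\<lambda>j. \<Sum>i<E. diag_entries (mat_mult (PL2R i) (F i q) (NL i + 1)) j)"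
    and FL_def: "\<And>i q. FL i q = diag_entries (mat_mult (PR2L i) (mat_transp (F i q)) (NR + 1))"
  shows "(\<forall>q<M. DR * (\<Sum>j\<le>NR. WR j * FR q j)
              - (\<Sum>i<E. DL i * (\<Sum>k\<le>NL i. WL i k * FL i q k)) = 0) \<and>
         DR * ((\<Sum>q<M. \<Sum>j\<le>NR. v (UR j) q * WR j * FR q j) - (\<Sum>j\<le>NR. WR j * Psi (UR j)))
         - (\<Sum>i<E. DL i * ((\<Sum>q<M. \<Sum>k\<le>NL i. v (UL i k) q * WL i k * FL i q k)
                            - (\<Sum>k\<le>NL i. WL i k * Psi (UL i k)))) = 0"
  proof -
  have H: "DR * (\<Sum>j\<le>NR. WR j * (\<Sum>i<E. \<Sum>k\<le>NL i. PL2R i j k * g i k j))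
     = (\<Sum>i<E. DL i * (\<Sum>k\<le>NL i. WL i k * (\<Sum>j\<le>NR. PR2L i k j * g i k j)))" for g
  proof -
    have "DR * (\<Sum>j\<le>NR. WR j * (\<Sum>i<E. \<Sum>k\<le>NL i. PL2R i j k * g i k j))
        = (\<Sum>j\<le>NR. \<Sum>i<E. \<Sum>k\<le>NL i. DR * (WR j * PL2R i j k) * g i k j)"
      by (simp add: sum_distrib_left mult.assoc)
    also have "\<dots> = (\<Sum>i<E. \<Sum>j\<le>NR. \<Sum>k\<le>NL i. DR * (WR j * PL2R i j k) * g i k j)"
      by (rule sum.swap)
    also have "\<dots> = (\<Sum>i<E. \<Sum>k\<le>NL i. \<Sum>j\<le>NR. DR * (WR j * PL2R i j k) * g i k j)"
      by (rule sum.cong[OF refl], rule sum.swap)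
    also have "\<dots> = (\<Sum>i<E. \<Sum>k\<le>NL i. \<Sum>j\<le>NR. DL i * (mat_transp (PR2L i) j k * WL i k) * g i k j)"
      by (intro sum.cong refl, simp add: SBP)
    also have "\<dots> = (\<Sum>i<E. DL i * (\<Sum>k\<le>NL i. WL i k * (\<Sum>j\<le>NR. PR2L i k j * g i k j)))"
      by (simp add: sum_distrib_left mat_transp_def mult_ac)
    finally show ?thesis .
  qed
  have FRe: "FR q j = (\<Sum>i<E. \<Sum>k\<le>NL i. PL2R i j k * fEC (UL i k) (UR j) q)" for q j
    by (simp add: FR_def F_def diag_entries_def mat_mult_def lessThan_Suc_atMost)
  have FLe: "FL i q k = (\<Sum>j\<le>NR. PR2L i k j * fEC (UL i k) (UR j) q)" for i q k
    by (simp add: FL_def F_def diag_entries_def mat_mult_def mat_transp_def lessThan_Suc_atMost)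
  have P1: "\<forall>q<M. DR * (\<Sum>j\<le>NR. WR j * FR q j)
              - (\<Sum>i<E. DL i * (\<Sum>k\<le>NL i. WL i k * FL i q k)) = 0"
    using H[of "\<lambda>i k j. fEC (UL i k) (UR j) q" for q] by (simp add: FRe FLe)
  define f where "f q i k j = fEC (UL i k) (UR j) q" for q i k j
  define gR where "gR i k j = (\<Sum>q<M. v (UR j) q * f q i k j)" for i k j
  define gL where "gL i k j = (\<Sum>q<M. v (UL i k) q * f q i k j)" for i k j
  have X1: "(\<Sum>q<M. \<Sum>j\<le>NR. v (UR j) q * WR j * FR q j)
      = (\<Sum>j\<le>NR. WR j * (\<Sum>i<E. \<Sum>k\<le>NL i. PL2R i j k * gR i k j))"
  proof -
    have "(\<Sum>q<M. \<Sum>j\<le>NR. v (UR j) q * WR j * FR q j)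
        = (\<Sum>j\<le>NR. \<Sum>q<M. v (UR j) q * WR j * FR q j)" by (rule sum.swap)
    also have "\<dots> = (\<Sum>j\<le>NR. \<Sum>q<M. \<Sum>i<E. \<Sum>k\<le>NL i. WR j * (PL2R i j k * (v (UR j) q * f q i k j)))"
      by (simp add: FRe f_def sum_distrib_left mult_ac)
    also have "\<dots> = (\<Sum>j\<le>NR. \<Sum>i<E. \<Sum>k\<le>NL i. \<Sum>q<M. WR j * (PL2R i j k * (v (UR j) q * f q i k j)))"
      apply (rule sum.cong[OF refl])
      apply (subst sum.swap)
      apply (rule sum.cong[OF refl])
      apply (subst sum.swap)
      by simp
    also have "\<dots> = (\<Sum>j\<le>NR. WR j * (\<Sum>i<E. \<Sum>k\<le>NL i. PL2R i j k * gR i k j))"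
      by (simp add: gR_def sum_distrib_left)
    finally show ?thesis .
  qed
  have X2: "(\<Sum>q<M. \<Sum>k\<le>NL i. v (UL i k) q * WL i k * FL i q k)
      = (\<Sum>k\<le>NL i. WL i k * (\<Sum>j\<le>NR. PR2L i k j * gL i k j))" for i
  proof -
    have "(\<Sum>q<M. \<Sum>k\<le>NL i. v (UL i k) q * WL i k * FL i q k)
        = (\<Sum>k\<le>NL i. \<Sum>q<M. v (UL i k) q * WL i k * FL i q k)" by (rule sum.swap)
    also have "\<dots> = (\<Sum>k\<le>NL i. \<Sum>q<M. \<Sum>j\<le>NR. WL i k * (PR2L i k j * (v (UL i k) q * f q i k j)))"
      by (simp add: FLe f_def sum_distrib_left mult_ac)
    also have "\<dots> = (\<Sum>k\<le>NL i. \<Sum>j\<le>NR. \<Sum>q<M. WL i k * (PR2L i k j * (v (UL i k) q * f q i k j)))"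
      by (rule sum.cong[OF refl], rule sum.swap)
    also have "\<dots> = (\<Sum>k\<le>NL i. WL i k * (\<Sum>j\<le>NR. PR2L i k j * gL i k j))"
      by (simp add: gL_def sum_distrib_left)
    finally show ?thesis .
  qed
  have G: "gR i k j - gL i k j = Psi (UR j) - Psi (UL i k)" if "i < E" "k \<le> NL i" "j \<le> NR" for i k j
  proof -
    have "gR i k j - gL i k j = (\<Sum>q<M. (v (UR j) q - v (UL i k) q) * fEC (UL i k) (UR j) q)"
      by (simp add: gR_def gL_def f_def sum_subtractf[symmetric] left_diff_distrib)
    also have "\<dots> = Psi (UR j) - Psi (UL i k)" using EC UL_D UR_D that by blast
    finally show ?thesis .
  qed
  define PR where "PR = (\<Sum>j\<le>NR. WR j * Psi (UR j))"
  define PL where "PL i = (\<Sum>k\<le>NL i. WL i k * Psi (UL i k))" for i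
  have D1: "DR * (\<Sum>q<M. \<Sum>j\<le>NR. v (UR j) q * WR j * FR q j)
      - (\<Sum>i<E. DL i * (\<Sum>q<M. \<Sum>k\<le>NL i. v (UL i k) q * WL i k * FL i q k))
      = (\<Sum>i<E. DL i * (\<Sum>k\<le>NL i. WL i k * (\<Sum>j\<le>NR. PR2L i k j * (gR i k j - gL i k j))))"
    unfolding X1 X2 H
    by (simp add: sum_subtractf[symmetric] right_diff_distrib[symmetric])
  also have "\<dots> = (\<Sum>i<E. DL i * (\<Sum>k\<le>NL i. WL i k * (\<Sum>j\<le>NR. PR2L i k j * Psi (UR j))))
       - (\<Sum>i<E. DL i * (\<Sum>k\<le>NL i. WL i k * (\<Sum>j\<le>NR. PR2L i k j * Psi (UL i k))))"
    by (simp add: G sum_subtractf[symmetric] right_diff_distrib[symmetric])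
  also have "(\<Sum>i<E. DL i * (\<Sum>k\<le>NL i. WL i k * (\<Sum>j\<le>NR. PR2L i k j * Psi (UL i k))))
      = (\<Sum>i<E. DL i * PL i)"
    by (simp add: PL_def sum_distrib_right[symmetric] R2L_one)
  also have "(\<Sum>i<E. DL i * (\<Sum>k\<le>NL i. WL i k * (\<Sum>j\<le>NR. PR2L i k j * Psi (UR j))))
      = DR * PR"
    unfolding H[of "\<lambda>i k j. Psi (UR j)", symmetric]
    by (simp add: PR_def sum_distrib_right[symmetric] L2R_one)
  finally have D2: "DR * (\<Sum>q<M. \<Sum>j\<le>NR. v (UR j) q * WR j * FR q j)
      - (\<Sum>i<E. DL i * (\<Sum>q<M. \<Sum>k\<le>NL i. v (UL i k) q * WL i k * FL i q k))
      = DR * PR - (\<Sum>i<E. DL i * PL i)" .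
  have "DR * ((\<Sum>q<M. \<Sum>j\<le>NR. v (UR j) q * WR j * FR q j) - PR)
         - (\<Sum>i<E. DL i * ((\<Sum>q<M. \<Sum>k\<le>NL i. v (UL i k) q * WL i k * FL i q k) - PL i)) = 0"
    using D2 by (simp add: right_diff_distrib sum_subtractf)
  then show ?thesis using P1 unfolding PR_def PL_def by simp
qed

end
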